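(* Let $(\Omega,\mathcal F,\mathbb P)$ be a probability space and $u:\Omega\times\mathbb R\to\mathbb R$ satisfy: (i) for every $\omega$, $u(\omega,\cdot)$ is right continuous with left limits, nondecreasing, and $u(\omega,0)=0$; (ii) $u(\cdot,x)\in\mathcal L^1(\Omega,\mathcal F,\mathbb P)$ for every $x\in\mathbb R$; (iii) the functional $T_u(f):=\int_\Omega u(\omega,f(\omega))\,\mathbb P(d\omega)$ on $\mathcal L^\infty(\Omega,\mathcal F)$ is continuous from below, i.e. $T_u(f_n)\to T_u(f)$ whenever $f_n\in\mathcal L^\infty(\Omega,\mathcal F)$ and $f_n(\omega)\uparrow f(\omega)$ for every $\omega$, with $f\in\mathcal L^\infty(\Omega,\mathcal F)$. Then $A_{\mathrm{cont}}:=\{\omega\in\Omega: x\mapsto u(\omega,x)\text{ is continuous on }\mathbb R\}\in\mathcal F$ and $\mathbb P(A_{\mathrm{cont}})=1$.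
   Context: $\mathcal L^\infty(\Omega,\mathcal F)$: bounded $\mathcal F$-measurable real functions. *)

theory Defs
  imports "HOL-Probability.Probability"
begin

definition Linfty :: "'a measure \<Rightarrow> ('a \<Rightarrow> real) set" where
  "Linfty M = {f. f \<in> borel_measurable M \<and> (\<exists>C. \<forall>\<omega>\<in>space M. \<bar>f \<omega>\<bar> \<le> C)}"

definition T_u :: "'a measure \<Rightarrow> ('a \<Rightarrow> real \<Rightarrow> real) \<Rightarrow> ('a \<Rightarrow> real) \<Rightarrow> real" where
  "T_u M u f = (\<integral>\<omega>. u \<omega> (f \<omega>) \<partial>M)"

end

theory Submission
  imports Defs
begin


lemma pow2_lim: "(\<lambda>k::nat. h + 1 / (2::real)^k) \<longlonglongrightarrow> h"
proof -
  have "(\<lambda>k::nat. 1 / (2::real)^k) \<longlonglongrightarrow> 0"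
    by (intro LIMSEQ_divide_realpow_zero) auto
  from tendsto_add[OF tendsto_const this] show ?thesis by simp
qed

lemma comp_meas:
  fixes u :: "'a \<Rightarrow> real \<Rightarrow> real"
  assumes rc: "\<And>\<omega> x. \<omega> \<in> space M \<Longrightarrow> continuous (at_right x) (u \<omega>)"
  and um: "\<And>x. (\<lambda>\<omega>. u \<omega> x) \<in> borel_measurable M"
  and h: "h \<in> borel_measurable M"
  shows "(\<lambda>\<omega>. u \<omega> (h \<omega>)) \<in> borel_measurable M"
proof (rule borel_measurable_LIMSEQ_real)
  define hk where "hk k \<omega> = (real_of_int (\<lfloor>2^k * h \<omega>\<rfloor>) + 1) / 2^k" for k::nat and \<omega>
  show "(\<lambda>\<omega>. u \<omega> (hk k \<omega>)) \<in> borel_measurable M" for k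
  proof -
    have "(\<lambda>\<omega>. u \<omega> ((real_of_int (\<lfloor>2^k * h \<omega>\<rfloor>) + 1) / 2^k)) \<in> borel_measurable M"
      by (rule measurable_compose_countable[where f="\<lambda>i \<omega>. u \<omega> ((real_of_int i + 1)/2^k)"])
        (use um in auto, use h in measurable)
    then show ?thesis unfolding hk_def .
  qed
  show "(\<lambda>k. u \<omega> (hk k \<omega>)) \<longlonglongrightarrow> u \<omega> (h \<omega>)" if w: "\<omega> \<in> space M" for \<omega>
  proof -
    have gt: "hk k \<omega> > h \<omega>" for k
    proof -
      have "2^k * h \<omega> < real_of_int (\<lfloor>2^k * h \<omega>\<rfloor>) + 1" by linarith
      then show ?thesis unfolding hk_def by (simp add: field_simps)
    qed
    have le: "hk k \<omega> \<le> h \<omega> + 1 / 2^k" for k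
    proof -
      have "real_of_int (\<lfloor>2^k * h \<omega>\<rfloor>) + 1 \<le> 2^k * h \<omega> + 1" by linarith
      then show ?thesis unfolding hk_def by (simp add: field_simps)
    qed
    have "(\<lambda>k. hk k \<omega>) \<longlonglongrightarrow> h \<omega>"
      by (rule tendsto_sandwich[OF _ _ tendsto_const pow2_lim]) (auto intro: always_eventually less_imp_le gt le)
    then have "filterlim (\<lambda>k. hk k \<omega>) (at_right (h \<omega>)) sequentially"
      unfolding filterlim_at
      apply (intro conjI)
      subgoal by (rule always_eventually) (metis gt greaterThan_iff order_less_irrefl)
      subgoal by assumption
      done
    moreover have "(u \<omega> \<longlongrightarrow> u \<omega> (h \<omega>)) (at_right (h \<omega>))"
      using rc[OF w] by (simp add: continuous_within)
    ultimately show ?thesis by (rule filterlim_compose[rotated])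
  qed
qed

lemma ae_left:
  fixes M :: "'a measure" and u :: "'a \<Rightarrow> real \<Rightarrow> real"
  assumes rcll: "\<And>\<omega>. \<omega> \<in> space M \<Longrightarrow>
        (\<forall>x. continuous (at_right x) (u \<omega>)) \<and> (\<forall>x. \<exists>l. (u \<omega> \<longlongrightarrow> l) (at_left x))"
    and mono: "\<And>\<omega>. \<omega> \<in> space M \<Longrightarrow> mono (u \<omega>)"
    and integ: "\<And>x. integrable M (\<lambda>\<omega>. u \<omega> x)"
    and cont_below: "\<And>fs f. (\<And>n. fs n \<in> Linfty M) \<Longrightarrow> f \<in> Linfty M \<Longrightarrow>
        (\<And>\<omega>. \<omega> \<in> space M \<Longrightarrow> incseq (\<lambda>n. fs n \<omega>)) \<Longrightarrow>
        (\<And>\<omega>. \<omega> \<in> space M \<Longrightarrow> (\<lambda>n. fs n \<omega>) \<longlonglongrightarrow> f \<omega>) \<Longrightarrow>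
        (\<lambda>n. T_u M u (fs n)) \<longlonglongrightarrow> T_u M u f"
    and fm[measurable]: "f \<in> borel_measurable M"
    and fb: "\<And>\<omega>. \<omega> \<in> space M \<Longrightarrow> \<bar>f \<omega>\<bar> \<le> C"
  shows "AE \<omega> in M. lim (\<lambda>n. u \<omega> (f \<omega> - 1 / real (Suc n))) = u \<omega> (f \<omega>)"
proof -
  define fs where "fs n \<omega> = f \<omega> - 1 / real (Suc n)" for n \<omega>
  define s where "s n \<omega> = u \<omega> (fs n \<omega>)" for n \<omega>
  define g where "g \<omega> = u \<omega> (f \<omega>)" for \<omega>
  define L where "L \<omega> = lim (\<lambda>n. s n \<omega>)" for \<omega>
  have um: "(\<lambda>\<omega>. u \<omega> x) \<in> borel_measurable M" for x using integ by auto
  have rc: "\<And>\<omega> x. \<omega> \<in> space M \<Longrightarrow> continuous (at_right x) (u \<omega>)" using rcll by blast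
  have fsm[measurable]: "fs n \<in> borel_measurable M" for n unfolding fs_def by measurable
  have sm[measurable]: "s n \<in> borel_measurable M" for n
    unfolding s_def by (rule comp_meas[OF rc um fsm])
  have gm[measurable]: "g \<in> borel_measurable M"
    unfolding g_def by (rule comp_meas[OF rc um fm])
  have Lm[measurable]: "L \<in> borel_measurable M" unfolding L_def by measurable
  have fsL: "fs n \<in> Linfty M" for n
  proof -
    have "\<bar>fs n \<omega>\<bar> \<le> C + 1" if "\<omega> \<in> space M" for \<omega>
    proof -
      have "0 \<le> 1 / real (Suc n)" "1 / real (Suc n) \<le> 1" by (auto simp: field_simps)
      then show ?thesis using fb[OF that] unfolding fs_def by linarith
    qed
    then show ?thesis unfolding Linfty_def using fsm by blast
  qed
  have fL: "f \<in> Linfty M" unfolding Linfty_def using fb fm by blast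
  have inc: "incseq (\<lambda>n. fs n \<omega>)" for \<omega>
    by (rule incseq_SucI) (simp add: fs_def frac_le)
  have fslim: "(\<lambda>n. fs n \<omega>) \<longlonglongrightarrow> f \<omega>" for \<omega>
  proof -
    have "(\<lambda>n. f \<omega> - inverse (real (Suc n))) \<longlonglongrightarrow> f \<omega> - 0"
      by (intro tendsto_diff tendsto_const LIMSEQ_inverse_real_of_nat)
    then show ?thesis by (simp add: fs_def inverse_eq_divide)
  qed
  have T: "(\<lambda>n. integral\<^sup>L M (s n)) \<longlonglongrightarrow> integral\<^sup>L M g"
    using cont_below[OF fsL fL inc fslim] unfolding T_u_def s_def g_def .
  define w where "w \<omega> = \<bar>u \<omega> (- C - 1)\<bar> + \<bar>u \<omega> C\<bar>" for \<omega>
  have wi: "integrable M w" unfolding w_def using integ by auto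
  have bnd: "\<bar>s n \<omega>\<bar> \<le> w \<omega>" if "\<omega> \<in> space M" for n \<omega>
  proof -
    have "0 \<le> 1 / real (Suc n)" "1 / real (Suc n) \<le> 1" by (auto simp: field_simps)
    then have "- C - 1 \<le> fs n \<omega>" "fs n \<omega> \<le> C" using fb[OF that] unfolding fs_def by linarith+
    then have "u \<omega> (- C - 1) \<le> s n \<omega>" "s n \<omega> \<le> u \<omega> C"
      using mono[OF that] unfolding s_def mono_def by auto
    then show ?thesis unfolding w_def by auto
  qed
  have gbnd: "norm (g \<omega>) \<le> w \<omega>" if "\<omega> \<in> space M" for \<omega>
  proof -
    have "- C - 1 \<le> f \<omega>" "f \<omega> \<le> C" using fb[OF that] by linarith+
    then have "u \<omega> (- C - 1) \<le> g \<omega>" "g \<omega> \<le> u \<omega> C"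
      using mono[OF that] unfolding g_def mono_def by auto
    then show ?thesis unfolding w_def by auto
  qed
  have slim: "(\<lambda>n. s n \<omega>) \<longlonglongrightarrow> L \<omega>" if w: "\<omega> \<in> space M" for \<omega>
  proof -
    obtain l where l: "(u \<omega> \<longlongrightarrow> l) (at_left (f \<omega>))" using rcll[OF w] by blast
    have lt: "fs n \<omega> < f \<omega>" for n unfolding fs_def by simp
    have "filterlim (\<lambda>n. fs n \<omega>) (at_left (f \<omega>)) sequentially"
      unfolding filterlim_at
      apply (intro conjI)
      subgoal by (rule always_eventually) (metis lt lessThan_iff order_less_irrefl)
      subgoal by (rule fslim)
      done
    then have "(\<lambda>n. s n \<omega>) \<longlonglongrightarrow> l" unfolding s_def by (rule filterlim_compose[OF l])
    then show ?thesis unfolding L_def by (simp add: limI)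
  qed
  have Li: "integrable M L"
    and DC: "(\<lambda>n. integral\<^sup>L M (s n)) \<longlonglongrightarrow> integral\<^sup>L M L"
    subgoal by (rule integrable_dominated_convergence[OF Lm sm wi]) (use slim bnd in \<open>auto intro!: AE_I2\<close>)
    subgoal by (rule integral_dominated_convergence[OF Lm sm wi]) (use slim bnd in \<open>auto intro!: AE_I2\<close>)
    done
  have gi: "integrable M g"
    by (rule Bochner_Integration.integrable_bound[OF wi gm]) (auto intro!: AE_I2 order_trans[OF _ abs_ge_self] gbnd[simplified])
  have eq: "integral\<^sup>L M L = integral\<^sup>L M g" using LIMSEQ_unique[OF DC T] .
  have Lle: "L \<omega> \<le> g \<omega>" if w: "\<omega> \<in> space M" for \<omega>
  proof (rule LIMSEQ_le_const2[OF slim[OF w]])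
    have "s n \<omega> \<le> g \<omega>" for n
      using mono[OF w] unfolding s_def g_def fs_def mono_def by simp
    then show "\<exists>N. \<forall>n\<ge>N. s n \<omega> \<le> g \<omega>" by blast
  qed
  have "integral\<^sup>L M (\<lambda>\<omega>. g \<omega> - L \<omega>) = 0" using eq gi Li by simp
  then have "AE \<omega> in M. g \<omega> - L \<omega> = 0"
    by (subst integral_nonneg_eq_0_iff_AE[symmetric]) (use gi Li Lle in \<open>auto intro!: AE_I2\<close>)
  then show ?thesis by eventually_elim (simp add: L_def s_def fs_def g_def)
qed

lemma left_seq:
  fixes v :: "real \<Rightarrow> real"
  assumes l: "(v \<longlongrightarrow> l) (at_left x)"
  shows "(\<lambda>n. v (x - 1 / real (Suc n))) \<longlonglongrightarrow> l"
proof -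
  have fslim: "(\<lambda>n. x - 1 / real (Suc n)) \<longlonglongrightarrow> x"
  proof -
    have "(\<lambda>n. x - inverse (real (Suc n))) \<longlonglongrightarrow> x - 0"
      by (intro tendsto_diff tendsto_const LIMSEQ_inverse_real_of_nat)
    then show ?thesis by (simp add: inverse_eq_divide)
  qed
  have lt: "x - 1 / real (Suc n) < x" for n by simp
  have "filterlim (\<lambda>n. x - 1 / real (Suc n)) (at_left x) sequentially"
    unfolding filterlim_at
    apply (intro conjI)
    subgoal by (rule always_eventually) (metis lt lessThan_iff order_less_irrefl)
    subgoal by (rule fslim)
    done
  then show ?thesis by (rule filterlim_compose[OF l])
qed

definition Fsel :: "(real \<Rightarrow> real) \<Rightarrow> real \<Rightarrow> real \<Rightarrow> real" where
  "Fsel v c N = Inf {x. - N \<le> x \<and> (c \<le> v x \<or> N \<le> x)}"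

lemma Fsel_mem:
  fixes v :: "real \<Rightarrow> real"
  assumes mono: "mono v" and rc: "\<And>x. continuous (at_right x) v" and N: "0 \<le> N"
  shows "Fsel v c N \<in> {x. - N \<le> x \<and> (c \<le> v x \<or> N \<le> x)}"
    and "Fsel v c N \<le> N"
proof -
  let ?S = "{x. - N \<le> x \<and> (c \<le> v x \<or> N \<le> x)}"
  have NS: "N \<in> ?S" using N by auto
  have bdd: "bdd_below ?S" by (rule bdd_belowI[of _ "-N"]) auto
  have le: "Fsel v c N \<le> N" unfolding Fsel_def by (rule cInf_lower[OF NS bdd])
  then show "Fsel v c N \<le> N" .
  have ge: "- N \<le> Fsel v c N" unfolding Fsel_def by (rule cInf_greatest; use NS in blast)
  show "Fsel v c N \<in> ?S"
  proof (cases "Fsel v c N = N")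
    case True then show ?thesis using NS by simp
  next
    case False
    let ?F = "Fsel v c N"
    have lt: "?F < N" using le False by simp
    have "c \<le> v y" if "?F < y" "y < N" for y
    proof -
      obtain s where s: "s \<in> ?S" "s < y"
        using \<open>?F < y\<close> unfolding Fsel_def using cInf_less_iff[of ?S y] NS bdd by blast
      then have "c \<le> v s" using \<open>y < N\<close> by auto
      also have "v s \<le> v y" using mono s(2) by (simp add: mono_def)
      finally show ?thesis .
    qed
    then have ev: "eventually (\<lambda>y. c \<le> v y) (at_right ?F)"
      unfolding eventually_at_right[OF lt] using lt by blast
    have "(v \<longlongrightarrow> v ?F) (at_right ?F)" using rc[of ?F] by (simp add: continuous_within)
    then have "c \<le> v ?F"
      by (rule tendsto_lowerbound[OF _ ev]) simp
    then show ?thesis using ge by simp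
  qed
qed

lemma Fsel_le:
  fixes v :: "real \<Rightarrow> real"
  assumes mono: "mono v" and rc: "\<And>x. continuous (at_right x) v" and N: "0 \<le> N"
  shows "Fsel v c N \<le> t \<longleftrightarrow> (N \<le> t \<or> (- N \<le> t \<and> c \<le> v t))"
proof
  let ?S = "{x. - N \<le> x \<and> (c \<le> v x \<or> N \<le> x)}"
  let ?F = "Fsel v c N"
  assume "?F \<le> t"
  moreover have "?F \<in> ?S" by (rule Fsel_mem[OF mono rc N])
  moreover have "v ?F \<le> v t" if "?F \<le> t" using mono that by (simp add: mono_def)
  ultimately show "N \<le> t \<or> (- N \<le> t \<and> c \<le> v t)" by auto
next
  let ?S = "{x. - N \<le> x \<and> (c \<le> v x \<or> N \<le> x)}"
  have bdd: "bdd_below ?S" by (rule bdd_belowI[of _ "-N"]) auto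
  assume "N \<le> t \<or> (- N \<le> t \<and> c \<le> v t)"
  then have "t \<in> ?S" using N by auto
  then show "Fsel v c N \<le> t" unfolding Fsel_def by (rule cInf_lower[OF _ bdd])
qed

lemma Fsel_jump:
  fixes v :: "real \<Rightarrow> real"
  assumes mono: "mono v" and rc: "\<And>x. continuous (at_right x) v" and N: "0 \<le> N"
    and x: "- N < x" "x < N" and l: "(v \<longlongrightarrow> l) (at_left x)" "l < c" "c < v x"
  shows "Fsel v c N = x"
proof (rule antisym)
  show "Fsel v c N \<le> x" using Fsel_le[OF mono rc N] x l by auto
  let ?F = "Fsel v c N"
  show "x \<le> ?F"
  proof (rule ccontr)
    assume "\<not> x \<le> ?F"
    then have lt: "?F < x" by simp
    have "?F \<in> {x. - N \<le> x \<and> (c \<le> v x \<or> N \<le> x)}" by (rule Fsel_mem[OF mono rc N])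
    then have "c \<le> v ?F" using lt x by auto
    have ev: "eventually (\<lambda>y. v ?F \<le> v y) (at_left x)"
      unfolding eventually_at_left[OF lt]
      by (intro exI[of _ ?F] conjI lt allI impI) (use mono in \<open>auto simp: mono_def\<close>)
    have "v ?F \<le> l" by (rule tendsto_lowerbound[OF l(1) ev]) simp
    then show False using \<open>c \<le> v ?F\<close> l by simp
  qed
qed


theorem mainTheorem14:
  fixes M :: "'a measure" and u :: "'a \<Rightarrow> real \<Rightarrow> real"
  assumes "prob_space M"
    and rcll: "\<And>\<omega>. \<omega> \<in> space M \<Longrightarrow>
        (\<forall>x. continuous (at_right x) (u \<omega>)) \<and> (\<forall>x. \<exists>l. (u \<omega> \<longlongrightarrow> l) (at_left x))"
    and mono: "\<And>\<omega>. \<omega> \<in> space M \<Longrightarrow> mono (u \<omega>)"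
    and zero: "\<And>\<omega>. \<omega> \<in> space M \<Longrightarrow> u \<omega> 0 = 0"
    and integ: "\<And>x. integrable M (\<lambda>\<omega>. u \<omega> x)"
    and cont_below: "\<And>fs f. (\<And>n. fs n \<in> Linfty M) \<Longrightarrow> f \<in> Linfty M \<Longrightarrow>
        (\<And>\<omega>. \<omega> \<in> space M \<Longrightarrow> incseq (\<lambda>n. fs n \<omega>)) \<Longrightarrow>
        (\<And>\<omega>. \<omega> \<in> space M \<Longrightarrow> (\<lambda>n. fs n \<omega>) \<longlonglongrightarrow> f \<omega>) \<Longrightarrow>
        (\<lambda>n. T_u M u (fs n)) \<longlonglongrightarrow> T_u M u f"
  shows "{\<omega> \<in> space M. continuous_on UNIV (u \<omega>)} \<in> sets M
    \<and> measure M {\<omega> \<in> space M. continuous_on UNIV (u \<omega>)} = 1"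
proof -
  interpret P: prob_space M by fact
  have um[measurable]: "(\<lambda>\<omega>. u \<omega> x) \<in> borel_measurable M" for x using integ by auto
  have rc: "\<And>x. continuous (at_right x) (u \<omega>)" if "\<omega> \<in> space M" for \<omega> using rcll[OF that] by blast
  define F where "F q N \<omega> = Fsel (u \<omega>) (real_of_rat q) (real N)" for q N \<omega>
  have Fm[measurable]: "F q N \<in> borel_measurable M" for q N
  proof (subst borel_measurable_iff_le, intro allI)
    fix t
    have "{w \<in> space M. F q N w \<le> t} = {w \<in> space M. real N \<le> t \<or> (- real N \<le> t \<and> real_of_rat q \<le> u w t)}"
      unfolding F_def using Fsel_le[OF mono rc] by auto
    also have "\<dots> \<in> sets M" by measurable
    finally show "{w \<in> space M. F q N w \<le> t} \<in> sets M" .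
  qed
  have Fb: "\<bar>F q N \<omega>\<bar> \<le> real N" if "\<omega> \<in> space M" for q N \<omega>
    using Fsel_mem[OF mono[OF that] rc[OF that], of "real N" "real_of_rat q"] unfolding F_def by auto
  define Q where "Q q N \<omega> = (lim (\<lambda>n. u \<omega> (F q N \<omega> - 1 / real (Suc n))) = u \<omega> (F q N \<omega>))" for q N \<omega>
  have AEQ: "AE \<omega> in M. Q q N \<omega>" for q N
    unfolding Q_def by (rule ae_left[OF rcll mono integ cont_below Fm Fb]) auto
  have Qm[measurable]: "Measurable.pred M (Q q N)" for q N
  proof -
    have "(\<lambda>\<omega>. u \<omega> (F q N \<omega>)) \<in> borel_measurable M" by (rule comp_meas[OF rc um Fm])
    moreover have "(\<lambda>\<omega>. u \<omega> (F q N \<omega> - 1 / real (Suc n))) \<in> borel_measurable M" for n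
      by (rule comp_meas[OF rc um]) measurable
    ultimately show ?thesis unfolding Q_def by measurable
  qed
  have eqv: "continuous_on UNIV (u \<omega>) \<longleftrightarrow> (\<forall>q N. Q q N \<omega>)" if w: "\<omega> \<in> space M" for \<omega>
  proof
    assume c: "continuous_on UNIV (u \<omega>)"
    show "\<forall>q N. Q q N \<omega>"
    proof (intro allI)
      fix q N
      let ?x = "F q N \<omega>"
      have "isCont (u \<omega>) ?x" using c by (simp add: continuous_on_eq_continuous_at)
      then have "(u \<omega> \<longlongrightarrow> u \<omega> ?x) (at_left ?x)"
        by (simp add: isCont_def filterlim_at_split)
      from left_seq[OF this] show "Q q N \<omega>" unfolding Q_def by (rule limI)
    qed
  next
    assume A: "\<forall>q N. Q q N \<omega>"
    show "continuous_on UNIV (u \<omega>)"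
      unfolding continuous_on_eq_continuous_at[OF open_UNIV]
    proof (intro ballI, rule ccontr)
      fix x assume nc: "\<not> isCont (u \<omega>) x"
      obtain l where l: "(u \<omega> \<longlongrightarrow> l) (at_left x)" using rcll[OF w] by blast
      have "\<not> continuous (at_left x) (u \<omega>)" using nc rc[OF w] continuous_at_split by blast
      then have ne: "l \<noteq> u \<omega> x" using l by (auto simp: continuous_within)
      have ev: "eventually (\<lambda>y. u \<omega> y \<le> u \<omega> x) (at_left x)"
        apply (subst eventually_at_left[of "x - 1" x])
        subgoal by simp
        by (intro exI[of _ "x - 1"] conjI allI impI) (use mono[OF w] in \<open>auto simp: mono_def\<close>)
      have "l \<le> u \<omega> x" by (rule tendsto_upperbound[OF l ev]) simp
      with ne have lt: "l < u \<omega> x" by simp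
      obtain r where r: "r \<in> \<rat>" "l < r" "r < u \<omega> x" using Rats_dense_in_real[OF lt] by blast
      then obtain q where q: "r = real_of_rat q" by (auto elim: Rats_cases)
      obtain N where N: "\<bar>x\<bar> < real N" using reals_Archimedean2 by blast
      have Fx: "F q N \<omega> = x" unfolding F_def
        by (rule Fsel_jump[OF mono[OF w] rc[OF w] _ _ _ l]) (use N r q in auto)
      have "lim (\<lambda>n. u \<omega> (x - 1 / real (Suc n))) = l" using left_seq[OF l] by (rule limI)
      then have "\<not> Q q N \<omega>" unfolding Q_def Fx using ne by simp
      then show False using A by blast
    qed
  qed
  have seteq: "{\<omega> \<in> space M. continuous_on UNIV (u \<omega>)} = {\<omega> \<in> space M. \<forall>q N. Q q N \<omega>}"
    using eqv by auto
  have S: "{\<omega> \<in> space M. continuous_on UNIV (u \<omega>)} \<in> sets M" unfolding seteq by measurable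
  have "AE \<omega> in M. \<forall>q N. Q q N \<omega>" using AEQ by (simp add: AE_all_countable)
  then have "AE \<omega> in M. \<omega> \<in> {\<omega> \<in> space M. continuous_on UNIV (u \<omega>)}"
    using eqv by (auto elim: AE_mp intro!: AE_I2)
  then have "measure M {\<omega> \<in> space M. continuous_on UNIV (u \<omega>)} = 1"
    using P.AE_in_set_eq_1[OF S] by simp
  with S show ?thesis by simp
qed

end
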